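(* Let $T$ be an oriented tree. Suppose there exists an integer $d$ such that every finite digraph $G$ with minimum out-degree $\delta^+(G)\geq d$ contains $T$ as a subgraph. Then $T$ is grounded, i.e. its height function $h_T$ takes the same value on all vertices $v$ of $T$ with in-degree $\deg^-_T(v)\geq 2$.
   Context: Digraphs are finite, have no loops and no multiple copies of the same edge, but may contain two edges in opposite directions between a pair of vertices. An oriented tree is an orientation of an undirected tree. For an oriented tree $T$, a height function $h_T\colon V(T)\to\mathbb{Z}$ is a function with $h_T(v)=h_T(u)+1$ for every edge $(u,v)\in E(T)$; it exists and is unique up to an additive constant. $\delta^+(G)$ denotes the minimum out-degree of $G$. "Contains $T$ as a subgraph" means $G$ has a subgraph isomorphic to $T$ (as a digraph). *)

theory Defs
  imports Main
begin

definition digraph :: "'a set \<Rightarrow> ('a \<times> 'a) set \<Rightarrow> bool" where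
  "digraph V E \<longleftrightarrow> finite V \<and> E \<subseteq> V \<times> V \<and> (\<forall>v. (v, v) \<notin> E)"

definition out_deg :: "('a \<times> 'a) set \<Rightarrow> 'a \<Rightarrow> nat" where
  "out_deg E v = card {w. (v, w) \<in> E}"

definition in_deg :: "('a \<times> 'a) set \<Rightarrow> 'a \<Rightarrow> nat" where
  "in_deg E v = card {u. (u, v) \<in> E}"

text \<open>Oriented tree: a loopless digraph with no pair of opposite edges whose underlying
undirected graph is a tree (connected, nonempty, with |V| - 1 edges).\<close>
definition oriented_tree :: "'a set \<Rightarrow> ('a \<times> 'a) set \<Rightarrow> bool" where
  "oriented_tree V E \<longleftrightarrow> digraph V E \<and> V \<noteq> {} \<and>
     (\<forall>u v. (u, v) \<in> E \<longrightarrow> (v, u) \<notin> E) \<and>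
     (\<forall>u\<in>V. \<forall>v\<in>V. (u, v) \<in> (E \<union> E\<inverse>)\<^sup>*) \<and>
     card E + 1 = card V"

definition contains_subgraph ::
  "'b set \<Rightarrow> ('b \<times> 'b) set \<Rightarrow> 'a set \<Rightarrow> ('a \<times> 'a) set \<Rightarrow> bool" where
  "contains_subgraph VG EG VT ET \<longleftrightarrow>
     (\<exists>f. f ` VT \<subseteq> VG \<and> inj_on f VT \<and> (\<forall>(u, v)\<in>ET. (f u, f v) \<in> EG))"

definition height_function :: "'a set \<Rightarrow> ('a \<times> 'a) set \<Rightarrow> ('a \<Rightarrow> int) \<Rightarrow> bool" where
  "height_function V E h \<longleftrightarrow> (\<forall>(u, v)\<in>E. h v = h u + 1)"

text \<open>Grounded: the (unique up to constant) height function takes the same value on all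
vertices of in-degree at least 2. Stated for every height function.\<close>
definition grounded :: "'a set \<Rightarrow> ('a \<times> 'a) set \<Rightarrow> bool" where
  "grounded V E \<longleftrightarrow> (\<forall>h. height_function V E h \<longrightarrow>
     (\<forall>u\<in>V. \<forall>v\<in>V. in_deg E u \<ge> 2 \<longrightarrow> in_deg E v \<ge> 2 \<longrightarrow> h u = h v))"

end

theory Submission
  imports Defs "HOL-Library.Countable"
begin

lemma two_elems: assumes "2 \<le> card S" shows "\<exists>a b. a \<in> S \<and> b \<in> S \<and> a \<noteq> b"
proof (rule ccontr)
  assume "\<not> ?thesis"
  hence "\<forall>a\<in>S. \<forall>b\<in>S. a = b" by blast
  hence "card S \<le> 1" using card_le_Suc0_iff_eq[of S] by (cases "finite S") auto
  thus False using assms by simp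
qed

definition WW :: "nat \<Rightarrow> nat \<Rightarrow> nat list set" where
  "WW D m = {w. set w \<subseteq> {..<D} \<and> 1 \<le> length w \<and> length w \<le> m}"

definition EE :: "nat \<Rightarrow> nat \<Rightarrow> (nat list \<times> nat list) set" where
  "EE D m = {(w, w @ [i]) | w i. w \<in> WW D m \<and> length w < m \<and> i < D}
          \<union> {(w, [i]) | w i. w \<in> WW D m \<and> length w = m \<and> i < D}"

lemma WW_finite: "finite (WW D m)"
proof -
  have "WW D m \<subseteq> {w. set w \<subseteq> {..<D} \<and> length w \<le> m}" unfolding WW_def by auto
  thus ?thesis using finite_lists_length_le[of "{..<D}" m] by (meson finite_lessThan finite_subset)
qed

lemma EE_sub: "m \<ge> 1 \<Longrightarrow> EE D m \<subseteq> WW D m \<times> WW D m"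
  unfolding EE_def WW_def by auto

lemma EE_digraph: "m \<ge> 2 \<Longrightarrow> digraph (WW D m) (EE D m)"
  unfolding digraph_def using WW_finite EE_sub[of m D]
  by (auto simp: EE_def WW_def)

lemma EE_outdeg: assumes "m \<ge> 2" "v \<in> WW D m" shows "D \<le> card {w. (v, w) \<in> EE D m}"
proof -
  have fin: "finite {w. (v, w) \<in> EE D m}"
  proof (rule finite_subset[of _ "WW D m"])
    show "{w. (v, w) \<in> EE D m} \<subseteq> WW D m" using EE_sub[of m D] assms by auto
    show "finite (WW D m)" by (rule WW_finite)
  qed
  show ?thesis
  proof (cases "length v < m")
    case True
    have "(\<lambda>i. v @ [i]) ` {..<D} \<subseteq> {w. (v, w) \<in> EE D m}" using True assms by (auto simp: EE_def)
    moreover have "card ((\<lambda>i. v @ [i]) ` {..<D}) = D" by (subst card_image) (auto simp: inj_on_def)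
    ultimately show ?thesis using fin by (metis card_mono)
  next
    case False
    hence "length v = m" using assms by (auto simp: WW_def)
    hence "(\<lambda>i. [i]) ` {..<D} \<subseteq> {w. (v, w) \<in> EE D m}" using assms by (auto simp: EE_def)
    moreover have "card ((\<lambda>i. [i]) ` {..<D}) = D" by (subst card_image) (auto simp: inj_on_def)
    ultimately show ?thesis using fin by (metis card_mono)
  qed
qed

definition lev :: "nat list \<Rightarrow> int" where "lev w = int (length w) - 1"

lemma EE_lev: assumes "(p, q) \<in> EE D m" shows "lev q mod int m = (lev p + 1) mod int m"
proof -
  have "(\<exists>w i. (p, q) = (w, w @ [i])) \<or> (\<exists>w i. (p, q) = (w, [i]) \<and> length w = m)"
    using assms(1) unfolding EE_def by blast
  hence "lev q = lev p + 1 \<or> (lev q = 0 \<and> lev p + 1 = int m)" unfolding lev_def by auto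
  then show ?thesis by auto
qed

lemma EE_cases: assumes "(p, q) \<in> EE D m" "length q \<noteq> 1" shows "p = butlast q"
proof -
  have "(\<exists>w i. (p, q) = (w, w @ [i])) \<or> (\<exists>w i. (p, q) = (w, [i]))"
    using assms(1) unfolding EE_def by blast
  thus ?thesis using assms(2) by auto
qed

lemma EE_indeg: assumes "(p, q) \<in> EE D m" "(p', q) \<in> EE D m" "p \<noteq> p'" shows "lev q = 0"
proof (rule ccontr)
  assume "lev q \<noteq> 0"
  hence "length q \<noteq> 1" unfolding lev_def by auto
  hence "p = butlast q" "p' = butlast q" using EE_cases assms(1,2) by blast+
  thus False using assms(3) by simp
qed

theorem theorem1p3:
  fixes VT :: "'a set" and ET :: "('a \<times> 'a) set"
  assumes "oriented_tree VT ET"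
    and "\<exists>d::int. \<forall>(VG :: nat set) EG. digraph VG EG \<longrightarrow> VG \<noteq> {} \<longrightarrow>
            (\<forall>v\<in>VG. int (out_deg EG v) \<ge> d) \<longrightarrow> contains_subgraph VG EG VT ET"
  shows "grounded VT ET"
  unfolding grounded_def
proof (intro allI impI ballI)
  fix h u v
  assume hf: "height_function VT ET h" and uV: "u \<in> VT" and vV: "v \<in> VT"
    and du: "2 \<le> in_deg ET u" and dv: "2 \<le> in_deg ET v"
  obtain d :: int where hd: "\<forall>(VG :: nat set) EG. digraph VG EG \<longrightarrow> VG \<noteq> {} \<longrightarrow>
            (\<forall>v\<in>VG. int (out_deg EG v) \<ge> d) \<longrightarrow> contains_subgraph VG EG VT ET"
    using assms(2) by blast
  define D where "D = nat d + 1"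
  define m where "m = nat \<bar>h u - h v\<bar> + 2"
  have m2: "m \<ge> 2" by (simp add: m_def)
  define g where "g = (to_nat :: nat list \<Rightarrow> nat)"
  have ig: "inj g" unfolding g_def by simp
  define VG where "VG = g ` WW D m"
  define EG where "EG = map_prod g g ` EE D m"
  have dg: "digraph (WW D m) (EE D m)" using EE_digraph[OF m2] .
  have "digraph VG EG"
    unfolding digraph_def
  proof (intro conjI allI)
    show "finite VG" unfolding VG_def using WW_finite by simp
    show "EG \<subseteq> VG \<times> VG" unfolding VG_def EG_def using dg unfolding digraph_def by auto
    fix x show "(x, x) \<notin> EG"
    proof
      assume "(x, x) \<in> EG"
      then obtain pq where "pq \<in> EE D m" "(x, x) = map_prod g g pq" unfolding EG_def by (rule imageE)
      then obtain p q where pq: "(p, q) \<in> EE D m" "g p = x" "g q = x" by (cases pq) simp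
      hence "p = q" using ig by (simp add: inj_def)
      thus False using pq(1) dg unfolding digraph_def by blast
    qed
  qed
  moreover have "VG \<noteq> {}"
  proof -
    have "[0] \<in> WW D m" using m2 by (auto simp: WW_def D_def)
    thus ?thesis by (auto simp: VG_def)
  qed
  moreover have "\<forall>x\<in>VG. int (out_deg EG x) \<ge> d"
  proof
    fix x assume "x \<in> VG"
    then obtain w where w: "w \<in> WW D m" "x = g w" by (auto simp: VG_def)
    have "{y. (x, y) \<in> EG} = g ` {y. (w, y) \<in> EE D m}"
    proof (rule set_eqI, rule iffI)
      fix y assume "y \<in> {y. (x, y) \<in> EG}"
      then obtain p q where "(p, q) \<in> EE D m" "g p = x" "g q = y" unfolding EG_def by auto
      moreover have "p = w" using calculation(2) w(2) ig by (simp add: inj_def)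
      ultimately show "y \<in> g ` {y. (w, y) \<in> EE D m}" by blast
    next
      fix y assume "y \<in> g ` {y. (w, y) \<in> EE D m}"
      then obtain q where "(w, q) \<in> EE D m" "y = g q" by blast
      thus "y \<in> {y. (x, y) \<in> EG}" unfolding EG_def using w(2) by force
    qed
    hence "out_deg EG x = card {y. (w, y) \<in> EE D m}"
      unfolding out_deg_def using ig by (simp add: card_image inj_on_subset)
    hence "out_deg EG x \<ge> D" using EE_outdeg[OF m2 w(1)] by simp
    thus "int (out_deg EG x) \<ge> d" unfolding D_def by linarith
  qed
  ultimately have "contains_subgraph VG EG VT ET" using hd by blast
  then obtain f' where f'1: "f' ` VT \<subseteq> VG" and f'2: "inj_on f' VT"
    and f'3: "\<forall>(a, b)\<in>ET. (f' a, f' b) \<in> EG" unfolding contains_subgraph_def by blast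
  define f where "f = inv g \<circ> f'"
  have fV: "\<And>x. x \<in> VT \<Longrightarrow> g (f x) = f' x"
    using f'1 unfolding f_def VG_def by (auto simp: f_inv_into_f)
  have ETsub: "ET \<subseteq> VT \<times> VT" using assms(1) unfolding oriented_tree_def digraph_def by blast
  have fE: "(f a, f b) \<in> EE D m" if "(a, b) \<in> ET" for a b
  proof -
    have "(f' a, f' b) \<in> EG" using f'3 that by blast
    then obtain pq where "pq \<in> EE D m" "(f' a, f' b) = map_prod g g pq" unfolding EG_def by (rule imageE)
    then obtain p q where "(p, q) \<in> EE D m" "g p = f' a" "g q = f' b" by (cases pq) simp
    moreover have "a \<in> VT" "b \<in> VT" using that ETsub by auto
    ultimately have "g p = g (f a)" "g q = g (f b)" using fV by auto
    hence "p = f a" "q = f b" using ig by (simp_all add: inj_def)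
    thus ?thesis using \<open>(p, q) \<in> EE D m\<close> by simp
  qed
  have finj: "inj_on f VT"
  proof (rule inj_onI)
    fix a b assume "a \<in> VT" "b \<in> VT" "f a = f b"
    hence "f' a = f' b" using fV by metis
    thus "a = b" using f'2 \<open>a \<in> VT\<close> \<open>b \<in> VT\<close> by (simp add: inj_on_def)
  qed
  define \<phi> where "\<phi> x = (h x - lev (f x)) mod int m" for x
  have edge_inv: "\<phi> a = \<phi> b" if "(a, b) \<in> ET" for a b
  proof -
    have "h b = h a + 1" using hf that unfolding height_function_def by blast
    moreover have "lev (f b) mod int m = (lev (f a) + 1) mod int m" using EE_lev[OF fE[OF that]] .
    ultimately show ?thesis unfolding \<phi>_def by (metis add_diff_cancel_right mod_diff_eq)
  qed
  have path: "\<phi> x = \<phi> y" if "(x, y) \<in> (ET \<union> ET\<inverse>)\<^sup>*" for x y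
    using that
  proof (induction rule: rtrancl_induct)
    case base thus ?case by simp
  next
    case (step y z) thus ?case using edge_inv by auto
  qed
  have lev0: "lev (f x) = 0" if xin: "x \<in> VT" "2 \<le> in_deg ET x" for x
  proof -
    obtain a b where ab: "(a, x) \<in> ET" "(b, x) \<in> ET" "a \<noteq> b"
      using two_elems[OF xin(2)[unfolded in_deg_def]] by blast
    have "f a \<noteq> f b" using finj ab ETsub unfolding inj_on_def by blast
    thus ?thesis using EE_indeg fE ab by blast
  qed
  have "(u, v) \<in> (ET \<union> ET\<inverse>)\<^sup>*" using assms(1) uV vV unfolding oriented_tree_def by blast
  hence "\<phi> u = \<phi> v" by (rule path)
  hence "h u mod int m = h v mod int m" unfolding \<phi>_def using lev0 uV vV du dv by simp
  hence "int m dvd (h u - h v)" by (simp add: mod_eq_dvd_iff)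
  moreover have "\<bar>h u - h v\<bar> < int m" unfolding m_def by simp
  ultimately show "h u = h v" using dvd_imp_le_int[of "h u - h v" "int m"] by force
qed

end
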